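(* For any string $\mathcal S\in\Sigma^n$ and any order-preserving permutation $\pi$ for $\mathcal S$, for every $i>1$ it holds $\mathrm{LPF}_\pi[i]\ge\mathrm{LPF}_\pi[i-1]-1$. In particular, the sequence $i+\mathrm{LPF}_\pi[i]$, for $i=1,\dots,n$, is nondecreasing.
   Context: For $i\ne j$, $\mathrm{rlce}(i,j)$ is the length of the longest common prefix of $\mathcal S[i,n]$ and $\mathcal S[j,n]$. A permutation $\pi:[n]\to[n]$ is order-preserving for $\mathcal S$ if for all $i,j\in[n-1]$, $\pi(i)<\pi(j)$ and $\mathcal S[i,i+1]=\mathcal S[j,j+1]$ imply $\pi(i+1)<\pi(j+1)$. $\mathrm{LPF}_\pi[i]=0$ if $\pi(i)=1$, else $\mathrm{LPF}_\pi[i]=\max_{\pi(j)<\pi(i)}\mathrm{rlce}(j,i)$. *)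

theory Defs
  imports "HOL-Combinatorics.Permutations"
begin

text \<open>Strings are lists; positions are 1-based: position i of S is S ! (i - 1),
  and the suffix S[i,n] is drop (i - 1) S.\<close>

fun lcp_len :: "'a list \<Rightarrow> 'a list \<Rightarrow> nat" where
  "lcp_len (x # xs) (y # ys) = (if x = y then Suc (lcp_len xs ys) else 0)"
| "lcp_len _ _ = 0"

definition rlce :: "'a list \<Rightarrow> nat \<Rightarrow> nat \<Rightarrow> nat" where
  "rlce S i j = lcp_len (drop (i - 1) S) (drop (j - 1) S)"

definition substr2 :: "'a list \<Rightarrow> nat \<Rightarrow> 'a list" where
  "substr2 S i = take 2 (drop (i - 1) S)"

definition order_preserving :: "'a list \<Rightarrow> (nat \<Rightarrow> nat) \<Rightarrow> bool" where
  "order_preserving S \<pi> \<longleftrightarrow>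
     \<pi> permutes {1..length S} \<and>
     (\<forall>i \<in> {1..length S - 1}. \<forall>j \<in> {1..length S - 1}.
        \<pi> i < \<pi> j \<and> substr2 S i = substr2 S j \<longrightarrow> \<pi> (i + 1) < \<pi> (j + 1))"

definition LPF :: "'a list \<Rightarrow> (nat \<Rightarrow> nat) \<Rightarrow> nat \<Rightarrow> nat" where
  "LPF S \<pi> i = (if \<pi> i = 1 then 0
      else Max {rlce S j i | j. j \<in> {1..length S} \<and> \<pi> j < \<pi> i})"

end

theory Submission
  imports Defs
begin

lemma lcp2:
  assumes "lcp_len xs ys \<ge> 2"
  shows "take 2 xs = take 2 ys \<and> lcp_len (tl xs) (tl ys) = lcp_len xs ys - 1
         \<and> length xs \<ge> 2 \<and> length ys \<ge> 2"
proof -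
  obtain x xs' where x: "xs = x # xs'" using assms by (cases xs) auto
  obtain y ys' where y: "ys = y # ys'" using assms by (cases ys) auto
  have xy: "x = y" using assms x y by (auto split: if_splits)
  have l1: "lcp_len xs' ys' \<ge> 1" using assms x y xy by auto
  obtain a as where a: "xs' = a # as" using l1 by (cases xs') auto
  obtain b bs where b: "ys' = b # bs" using l1 by (cases ys') auto
  have "a = b" using l1 a b by (auto split: if_splits)
  then show ?thesis using x y xy a b by auto
qed

lemma step:
  assumes op: "order_preserving S \<pi>" and i: "i \<in> {2..length S}"
  shows "LPF S \<pi> (i - 1) \<le> LPF S \<pi> i + 1"
proof -
  let ?n = "length S"
  have perm: "\<pi> permutes {1..?n}" using op unfolding order_preserving_def by blast
  have opr: "\<And>a b. a \<in> {1..?n - 1} \<Longrightarrow> b \<in> {1..?n - 1} \<Longrightarrow> \<pi> a < \<pi> b \<Longrightarrow>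
      substr2 S a = substr2 S b \<Longrightarrow> \<pi> (a + 1) < \<pi> (b + 1)"
    using op unfolding order_preserving_def by blast
  have rng: "\<And>x. x \<in> {1..?n} \<Longrightarrow> \<pi> x \<in> {1..?n}"
    using perm by (metis permutes_in_image)
  show ?thesis
  proof (cases "LPF S \<pi> (i - 1) \<le> 1")
    case True then show ?thesis by simp
  next
    case False
    define L where "L = LPF S \<pi> (i - 1)"
    have ne1: "\<pi> (i - 1) \<noteq> 1" using False unfolding LPF_def by auto
    define A where "A = {rlce S j (i - 1) | j. j \<in> {1..?n} \<and> \<pi> j < \<pi> (i - 1)}"
    have Afin: "finite A" unfolding A_def by auto
    have LA: "L = Max A" unfolding L_def LPF_def A_def using ne1 by simp
    have "A \<noteq> {}"
    proof -
      have "i - 1 \<in> {1..?n}" using i by auto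
      then have "\<pi> (i - 1) \<in> {1..?n}" by (rule rng)
      then have "1 \<in> \<pi> ` {1..?n}" using perm by (simp add: permutes_image)
      then obtain j where "j \<in> {1..?n}" "\<pi> j = 1" by auto
      then show ?thesis unfolding A_def using ne1 \<open>\<pi> (i - 1) \<in> {1..?n}\<close> by fastforce
    qed
    then have "L \<in> A" using Afin LA by simp
    then obtain j where j: "j \<in> {1..?n}" "\<pi> j < \<pi> (i - 1)" "rlce S j (i - 1) = L"
      unfolding A_def by auto
    have L2: "L \<ge> 2" using False L_def by simp
    have c: "take 2 (drop (j - 1) S) = take 2 (drop (i - 1 - 1) S)
         \<and> lcp_len (tl (drop (j - 1) S)) (tl (drop (i - 1 - 1) S)) = L - 1
         \<and> length (drop (j - 1) S) \<ge> 2 \<and> length (drop (i - 1 - 1) S) \<ge> 2"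
      using lcp2[of "drop (j - 1) S" "drop (i - 1 - 1) S"] j(3) L2 unfolding rlce_def by simp
    have jn: "j \<in> {1..?n - 1}" using c j(1) by auto
    have in1: "i - 1 \<in> {1..?n - 1}" using c i by auto
    have lt: "\<pi> (j + 1) < \<pi> i"
      using opr[OF jn in1 j(2)] c i unfolding substr2_def by simp
    have j1: "j + 1 \<in> {1..?n}" using jn by auto
    have pi1: "\<pi> i \<noteq> 1" using lt rng[OF j1] by auto
    have r: "rlce S (j + 1) i = L - 1"
    proof -
      have e1: "tl (drop (j - 1) S) = drop j S" using j(1)
        by (metis One_nat_def Suc_pred atLeastAtMost_iff drop_Suc le_less_trans less_one linorder_not_le tl_drop)
      have e2: "tl (drop (i - 1 - 1) S) = drop (i - 1) S" using i
        by (metis Suc_diff_Suc Suc_pred atLeastAtMost_iff diff_Suc_1 drop_Suc le_less_trans linorder_not_le not_less_eq_eq numeral_2_eq_2 tl_drop zero_less_Suc)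
      show ?thesis using c e1 e2 unfolding rlce_def by simp
    qed
    define B where "B = {rlce S j i | j. j \<in> {1..?n} \<and> \<pi> j < \<pi> i}"
    have "L - 1 \<in> B" unfolding B_def using r j1 lt by force
    moreover have "finite B" unfolding B_def by auto
    ultimately have "L - 1 \<le> Max B" by simp
    moreover have "LPF S \<pi> i = Max B" unfolding LPF_def B_def using pi1 by simp
    ultimately show ?thesis using L_def by simp
  qed
qed

theorem lemma11:
  fixes S :: "'a list" and \<pi> :: "nat \<Rightarrow> nat"
  assumes "order_preserving S \<pi>"
  shows "(\<forall>i \<in> {2..length S}. int (LPF S \<pi> i) \<ge> int (LPF S \<pi> (i - 1)) - 1)
       \<and> mono_on {1..length S} (\<lambda>i. i + LPF S \<pi> i)"
proof
  show "\<forall>i \<in> {2..length S}. int (LPF S \<pi> i) \<ge> int (LPF S \<pi> (i - 1)) - 1"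
    using step[OF assms] by force
next
  have st: "k + LPF S \<pi> k \<le> Suc k + LPF S \<pi> (Suc k)" if "k \<ge> 1" "Suc k \<le> length S" for k
    using step[OF assms, of "Suc k"] that by simp
  have "a + LPF S \<pi> a \<le> (a + d) + LPF S \<pi> (a + d)" if "a \<ge> 1" "a + d \<le> length S" for a d
    using that
  proof (induction d)
    case 0 then show ?case by simp
  next
    case (Suc d)
    then have "a + LPF S \<pi> a \<le> (a + d) + LPF S \<pi> (a + d)" by simp
    moreover have "(a + d) + LPF S \<pi> (a + d) \<le> Suc (a + d) + LPF S \<pi> (Suc (a + d))"
      using st[of "a + d"] Suc.prems by simp
    ultimately show ?case by simp
  qed
  then show "mono_on {1..length S} (\<lambda>i. i + LPF S \<pi> i)"
    unfolding mono_on_def monotone_on_def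
    by (metis atLeastAtMost_iff le_Suc_ex)
qed

end
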